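(* Let $D$ be a division ring, $A$ a finitely generated free abelian group, $D * A$ a crossed product, and $M$ a nonzero finitely generated $D * A$-module with $\mathrm{gk}(M)\ge 1$. Let $C<A$ be an infinite cyclic subgroup such that $M$ is $D * C$-torsion, and let $V$ be a carrier space of $\Delta^*(M)$. Then $V^\circ\cap C\neq\langle 1\rangle$.
   Context: A crossed product $D * A$ has $D$-basis $\{\bar a: a\in A\}$ with $\bar a_1\bar a_2=\tau(a_1,a_2)\overline{a_1a_2}$ ($\tau(a_1,a_2)\in D\setminus\{0\}$) and $\bar a d=\sigma_a(d)\bar a$ for automorphisms $\sigma_a$ of $D$. For $X\subseteq A$, $D * X$ is the set of elements whose support lies in $X$. $M$ is $D * C$-torsion if every element is annihilated by a nonzero element of $D * C$; $\mathrm{gk}$ is Gelfand–Kirillov dimension over $D$. Let $A^*=\mathrm{Hom}_{\mathbb Z}(A,\mathbb R)\cong\mathbb R^{\mathrm{rk}(A)}$. For $\phi\in A^*$ put $A(0,\phi)=\{a:\phi(a)\ge0\}$, $A(+,\phi)=\{a:\phi(a)>0\}$. For a finite generating set $\mathcal X$ of $M$, the trailing coefficient module is $TC_\phi(M)=\mathcal X(D * A(0,\phi))/\mathcal X(D * A(+,\phi))$, and $\Delta(M)=\{\phi\in A^*: TC_\phi(M)\neq0\}$ (independent of $\mathcal X$). A point $x$ of a subset $S\subseteq\mathbb R^n$ is regular if some neighborhood of $x$ in $S$ (intersection of $S$ with a ball centred at $x$) is an $m$-ball (intersection of a ball with an $m$-dimensional subspace) and no point of $S$ has this property for a larger $m$.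 $\Delta^*(M)$ is the Euclidean closure of the set of regular points of $\Delta(M)$; it is a closed rational polyhedron of dimension $\mathrm{gk}(M)$, and its carrier spaces are the linear spans of neighborhoods of its regular points. For a subspace $V\subseteq A^*$, $V^\circ=\{a\in A:\phi(a)=0\ \forall\phi\in V\}$. *)

theory Defs
  imports "HOL-Analysis.Analysis"
begin

text \<open>The free abelian group A of rank n is modelled as int^'n (additive notation);
 elements of the crossed product D*A are finitely supported functions A => D,
 f corresponding to the sum over a of (f a) abar.\<close>

definition fsupp :: "('a::ab_group_add \<Rightarrow> 'd::zero) \<Rightarrow> 'a set" where
  "fsupp f = {a. f a \<noteq> 0}"

definition CP :: "('a::ab_group_add \<Rightarrow> 'd::zero) set" where
  "CP = {f. finite (fsupp f)}"

definition CPon :: "'a::ab_group_add set \<Rightarrow> ('a \<Rightarrow> 'd::zero) set" where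
  "CPon X = {f \<in> CP. fsupp f \<subseteq> X}"

definition cp_one :: "'a::ab_group_add \<Rightarrow> 'd::{zero,one}" where
  "cp_one = (\<lambda>a. if a = 0 then 1 else 0)"

text \<open>Multiplication: (d abar)(e bbar) = d sigma_a(e) tau(a,b) (a+b)bar.\<close>
definition cp_mult :: "('a::ab_group_add \<Rightarrow> 'd::division_ring \<Rightarrow> 'd) \<Rightarrow> ('a \<Rightarrow> 'a \<Rightarrow> 'd)
    \<Rightarrow> ('a \<Rightarrow> 'd) \<Rightarrow> ('a \<Rightarrow> 'd) \<Rightarrow> ('a \<Rightarrow> 'd)" where
  "cp_mult \<sigma> \<tau> f g = (\<lambda>c. \<Sum>a\<in>fsupp f. f a * \<sigma> a (g (c - a)) * \<tau> a (c - a))"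

text \<open>Crossed product data (normalised so that 0bar is the identity): each sigma_a is a
 ring automorphism of D, tau takes nonzero values, and the associativity (cocycle)
 conditions hold.\<close>
definition crossed_product :: "('a::ab_group_add \<Rightarrow> 'd::division_ring \<Rightarrow> 'd) \<Rightarrow> ('a \<Rightarrow> 'a \<Rightarrow> 'd) \<Rightarrow> bool" where
  "crossed_product \<sigma> \<tau> \<longleftrightarrow>
     (\<forall>a. bij (\<sigma> a) \<and> (\<forall>x y. \<sigma> a (x + y) = \<sigma> a x + \<sigma> a y \<and> \<sigma> a (x * y) = \<sigma> a x * \<sigma> a y)
          \<and> \<sigma> a 1 = 1) \<and>
     (\<forall>a b. \<tau> a b \<noteq> 0) \<and>
     \<sigma> 0 = id \<and> (\<forall>a. \<tau> 0 a = 1 \<and> \<tau> a 0 = 1) \<and>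
     (\<forall>a b d. \<sigma> a (\<sigma> b d) * \<tau> a b = \<tau> a b * \<sigma> (a + b) d) \<and>
     (\<forall>a b c. \<tau> a b * \<tau> (a + b) c = \<sigma> a (\<tau> b c) * \<tau> a (b + c))"

text \<open>Right D*A-module structure on the abelian group 'm (the whole type is M).\<close>
definition right_module :: "('a::ab_group_add \<Rightarrow> 'd::division_ring \<Rightarrow> 'd) \<Rightarrow> ('a \<Rightarrow> 'a \<Rightarrow> 'd)
    \<Rightarrow> ('m::ab_group_add \<Rightarrow> ('a \<Rightarrow> 'd) \<Rightarrow> 'm) \<Rightarrow> bool" where
  "right_module \<sigma> \<tau> act \<longleftrightarrow>
     (\<forall>m m' f. f \<in> CP \<longrightarrow> act (m + m') f = act m f + act m' f) \<and>
     (\<forall>m f g. f \<in> CP \<longrightarrow> g \<in> CP \<longrightarrow> act m (\<lambda>a. f a + g a) = act m f + act m g) \<and>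
     (\<forall>m f g. f \<in> CP \<longrightarrow> g \<in> CP \<longrightarrow> act m (cp_mult \<sigma> \<tau> f g) = act (act m f) g) \<and>
     (\<forall>m. act m cp_one = m)"

definition XS :: "('m::ab_group_add \<Rightarrow> ('a \<Rightarrow> 'd) \<Rightarrow> 'm) \<Rightarrow> 'm set \<Rightarrow> ('a \<Rightarrow> 'd) set \<Rightarrow> 'm set" where
  "XS act X S = {(\<Sum>x\<in>X. act x (h x)) | h. \<forall>x\<in>X. h x \<in> S}"

definition generates :: "('m::ab_group_add \<Rightarrow> ('a::ab_group_add \<Rightarrow> 'd::zero) \<Rightarrow> 'm) \<Rightarrow> 'm set \<Rightarrow> bool" where
  "generates act X \<longleftrightarrow> XS act X CP = UNIV"

definition is_torsion :: "('m::ab_group_add \<Rightarrow> ('a::ab_group_add \<Rightarrow> 'd::zero) \<Rightarrow> 'm) \<Rightarrow> 'a set \<Rightarrow> bool" where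
  "is_torsion act C \<longleftrightarrow> (\<forall>m. \<exists>f \<in> CPon C. f \<noteq> (\<lambda>_. 0) \<and> act m f = 0)"

text \<open>Right D-vector space structure of M (restriction of scalars to D = D*{0}).\<close>
definition dsc :: "('m \<Rightarrow> ('a::ab_group_add \<Rightarrow> 'd::zero) \<Rightarrow> 'm) \<Rightarrow> 'm \<Rightarrow> 'd \<Rightarrow> 'm" where
  "dsc act m d = act m (\<lambda>a. if a = 0 then d else 0)"

definition rindep :: "('m::ab_group_add \<Rightarrow> ('a::ab_group_add \<Rightarrow> 'd::zero) \<Rightarrow> 'm) \<Rightarrow> 'm set \<Rightarrow> bool" where
  "rindep act Y \<longleftrightarrow> finite Y \<and>
     (\<forall>c. (\<Sum>y\<in>Y. dsc act y (c y)) = 0 \<longrightarrow> (\<forall>y\<in>Y. c y = 0))"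

definition rdim :: "('m::ab_group_add \<Rightarrow> ('a::ab_group_add \<Rightarrow> 'd::zero) \<Rightarrow> 'm) \<Rightarrow> 'm set \<Rightarrow> nat" where
  "rdim act W = Sup {card Y | Y. Y \<subseteq> W \<and> rindep act Y}"

definition ballA :: "nat \<Rightarrow> (int ^ 'n::finite) set" where
  "ballA k = {a. (\<Sum>i\<in>UNIV. \<bar>a $ i\<bar>) \<le> int k}"

definition gk :: "('m::ab_group_add \<Rightarrow> (int ^ 'n::finite \<Rightarrow> 'd::division_ring) \<Rightarrow> 'm) \<Rightarrow> 'm set \<Rightarrow> ereal" where
  "gk act X = limsup (\<lambda>k. ereal (ln (real (rdim act (XS act X (CPon (ballA k))))) / ln (real k)))"

text \<open>A^* = Hom(A,R) identified with real^'n.\<close>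
definition phi_app :: "real ^ 'n::finite \<Rightarrow> int ^ 'n \<Rightarrow> real" where
  "phi_app \<phi> a = (\<Sum>i\<in>UNIV. \<phi> $ i * real_of_int (a $ i))"

definition Delta :: "('m::ab_group_add \<Rightarrow> (int ^ 'n::finite \<Rightarrow> 'd::division_ring) \<Rightarrow> 'm) \<Rightarrow> 'm set \<Rightarrow> (real ^ 'n) set" where
  "Delta act X = {\<phi>. XS act X (CPon {a. phi_app \<phi> a \<ge> 0}) \<noteq> XS act X (CPon {a. phi_app \<phi> a > 0})}"

definition has_mball_nbhd :: "('a::euclidean_space) set \<Rightarrow> 'a \<Rightarrow> nat \<Rightarrow> bool" where
  "has_mball_nbhd S x m \<longleftrightarrow> x \<in> S \<and> (\<exists>r>0. \<exists>c s U. subspace U \<and> dim U = m \<and> S \<inter> ball x r = ball c s \<inter> U)"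

definition regular_point :: "('a::euclidean_space) set \<Rightarrow> 'a \<Rightarrow> bool" where
  "regular_point S x \<longleftrightarrow> (\<exists>m. has_mball_nbhd S x m \<and> (\<forall>y\<in>S. \<forall>m'>m. \<not> has_mball_nbhd S y m'))"

definition Delta_star :: "('m::ab_group_add \<Rightarrow> (int ^ 'n::finite \<Rightarrow> 'd::division_ring) \<Rightarrow> 'm) \<Rightarrow> 'm set \<Rightarrow> (real ^ 'n) set" where
  "Delta_star act X = closure {x. regular_point (Delta act X) x}"

definition carrier_space :: "('a::euclidean_space) set \<Rightarrow> 'a set \<Rightarrow> bool" where
  "carrier_space S V \<longleftrightarrow> (\<exists>x. regular_point S x \<and>
      (\<exists>r>0. \<exists>c s U. subspace U \<and> S \<inter> ball x r = ball c s \<inter> U \<and> V = span (S \<inter> ball x r)))"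

definition Vcirc :: "(real ^ 'n::finite) set \<Rightarrow> (int ^ 'n) set" where
  "Vcirc V = {a. \<forall>\<phi>\<in>V. phi_app \<phi> a = 0}"

end

theory Submission
  imports Defs
begin

lemma phi_add: "phi_app \<phi> (a + b) = phi_app \<phi> a + phi_app \<phi> b"
  unfolding phi_app_def by (simp add: algebra_simps sum.distrib)

lemma phi_diff: "phi_app \<phi> (a - b) = phi_app \<phi> a - phi_app \<phi> b"
  unfolding phi_app_def by (simp add: algebra_simps sum_subtractf)

lemma phi_smult: "phi_app \<phi> (k *s c) = real_of_int k * phi_app \<phi> c"
  unfolding phi_app_def by (simp add: sum_distrib_left algebra_simps)

lemma zero_CP: "(\<lambda>_. 0) \<in> CP"
  unfolding CP_def fsupp_def by simp

lemma act_zero_fun: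
  assumes "right_module \<sigma> \<tau> act"
  shows "act m (\<lambda>_. 0) = 0"
proof -
  have "act m (\<lambda>a. (\<lambda>_. 0) a + (\<lambda>_. 0) a) = act m (\<lambda>_. 0) + act m (\<lambda>_. 0)"
    using assms zero_CP unfolding right_module_def by blast
  then show ?thesis by simp
qed

lemma act_zero_left:
  assumes "right_module \<sigma> \<tau> act" "f \<in> CP"
  shows "act 0 f = 0"
proof -
  have "act (0 + 0) f = act 0 f + act 0 f"
    using assms unfolding right_module_def by blast
  then show ?thesis by simp
qed

lemma neg_CP: "(f::'a::ab_group_add \<Rightarrow> 'b::group_add) \<in> CP \<Longrightarrow> (\<lambda>a. - f a) \<in> CP"
  unfolding CP_def fsupp_def by simp

lemma act_neg:
  assumes "right_module \<sigma> \<tau> act" "f \<in> CP"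
  shows "act m (\<lambda>a. - f a) = - act m f"
proof -
  have "act m (\<lambda>a. f a + (\<lambda>a. - f a) a) = act m f + act m (\<lambda>a. - f a)"
    using assms neg_CP unfolding right_module_def by blast
  then have "0 = act m f + act m (\<lambda>a. - f a)"
    using act_zero_fun[OF assms(1)] by simp
  then show ?thesis by (simp add: eq_neg_iff_add_eq_0 add.commute)
qed

lemma sigma_zero:
  assumes "crossed_product \<sigma> \<tau>"
  shows "\<sigma> a 0 = 0"
proof -
  have "\<sigma> a (0 + 0) = \<sigma> a 0 + \<sigma> a 0"
    using assms unfolding crossed_product_def by blast
  then show ?thesis by simp
qed

lemma cp_mult_supp:
  assumes "crossed_product \<sigma> \<tau>" "p \<in> fsupp (cp_mult \<sigma> \<tau> w h)"
  shows "\<exists>a\<in>fsupp w. p - a \<in> fsupp h"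
proof (rule ccontr)
  assume "\<not> ?thesis"
  then have "\<forall>a\<in>fsupp w. h (p - a) = 0" by (auto simp: fsupp_def)
  then have "cp_mult \<sigma> \<tau> w h p = 0"
    unfolding cp_mult_def using sigma_zero[OF assms(1)] by simp
  then show False using assms(2) by (simp add: fsupp_def)
qed

lemma cp_mult_CPon:
  assumes "crossed_product \<sigma> \<tau>"
    and "w \<in> CPon {a. phi_app \<phi> a > 0}" "h \<in> CPon {a. phi_app \<phi> a \<ge> 0}"
  shows "cp_mult \<sigma> \<tau> w h \<in> CPon {a. phi_app \<phi> a > 0}"
proof -
  have fw: "finite (fsupp w)" and fh: "finite (fsupp h)"
    using assms by (auto simp: CPon_def CP_def)
  have sub: "fsupp (cp_mult \<sigma> \<tau> w h) \<subseteq> (\<lambda>(a,b). a + b) ` (fsupp w \<times> fsupp h)"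
  proof
    fix p assume "p \<in> fsupp (cp_mult \<sigma> \<tau> w h)"
    then obtain a where "a \<in> fsupp w" "p - a \<in> fsupp h" using cp_mult_supp[OF assms(1)] by blast
    then show "p \<in> (\<lambda>(a,b). a + b) ` (fsupp w \<times> fsupp h)"
      by (auto intro!: image_eqI[where x="(a, p - a)"])
  qed
  have fin: "finite (fsupp (cp_mult \<sigma> \<tau> w h))"
    using sub fw fh by (meson finite_SigmaI finite_imageI finite_subset)
  have pos: "fsupp (cp_mult \<sigma> \<tau> w h) \<subseteq> {a. phi_app \<phi> a > 0}"
  proof
    fix p assume "p \<in> fsupp (cp_mult \<sigma> \<tau> w h)"
    then obtain a where a: "a \<in> fsupp w" "p - a \<in> fsupp h" using cp_mult_supp[OF assms(1)] by blast
    then have "phi_app \<phi> a > 0" "phi_app \<phi> (p - a) \<ge> 0"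
      using assms by (auto simp: CPon_def)
    then show "p \<in> {a. phi_app \<phi> a > 0}" by (simp add: phi_diff)
  qed
  show ?thesis using fin pos by (simp add: CPon_def CP_def)
qed

lemma unit_lemma:
  fixes \<sigma> :: "int ^ 'n::finite \<Rightarrow> 'd::division_ring \<Rightarrow> 'd"
    and \<tau> :: "int ^ 'n \<Rightarrow> int ^ 'n \<Rightarrow> 'd"
    and act :: "'m::ab_group_add \<Rightarrow> (int ^ 'n \<Rightarrow> 'd) \<Rightarrow> 'm"
  assumes cp: "crossed_product \<sigma> \<tau>" and rm: "right_module \<sigma> \<tau> act"
    and gCP: "g \<in> CP" and gnz: "g \<noteq> (\<lambda>_. 0)" and ann: "act m g = 0"
    and inj: "\<forall>a\<in>fsupp g. \<forall>a'\<in>fsupp g. phi_app \<phi> a = phi_app \<phi> a' \<longrightarrow> a = a'"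
  shows "\<exists>w\<in>CPon {a. phi_app \<phi> a > 0}. act m w = m"
proof -
  have fin: "finite (fsupp g)" using gCP by (simp add: CP_def)
  have ne: "fsupp g \<noteq> {}" using gnz by (auto simp: fsupp_def)
  define v where "v = Min (phi_app \<phi> ` fsupp g)"
  have "v \<in> phi_app \<phi> ` fsupp g" unfolding v_def using fin ne by simp
  then obtain b where b: "b \<in> fsupp g" "phi_app \<phi> b = v" by blast
  have bmin: "\<And>a. a \<in> fsupp g \<Longrightarrow> a \<noteq> b \<Longrightarrow> phi_app \<phi> a > phi_app \<phi> b"
  proof -
    fix a assume a: "a \<in> fsupp g" "a \<noteq> b"
    have "phi_app \<phi> b \<le> phi_app \<phi> a" using b fin a unfolding v_def by simp
    moreover have "phi_app \<phi> a \<noteq> phi_app \<phi> b" using inj a b by blast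
    ultimately show "phi_app \<phi> a > phi_app \<phi> b" by simp
  qed
  have gb: "g b \<noteq> 0" using b by (simp add: fsupp_def)
  have tnz: "\<tau> b (-b) \<noteq> 0" using cp unfolding crossed_product_def by blast
  have bijb: "bij (\<sigma> b)" using cp unfolding crossed_product_def by blast
  define e0 where "e0 = inv (\<sigma> b) (inverse (g b) * inverse (\<tau> b (-b)))"
  have se0: "\<sigma> b e0 = inverse (g b) * inverse (\<tau> b (-b))"
    unfolding e0_def using bijb by (simp add: bij_is_surj surj_f_inv_f)
  define e where "e = (\<lambda>q. if q = -b then e0 else (0::'d))"
  have eCP: "e \<in> CP" unfolding CP_def fsupp_def e_def
    by (rule CollectI, rule finite_subset[of _ "{-b}"]) auto
  have ge: "cp_mult \<sigma> \<tau> g e = (\<lambda>p. g (p+b) * \<sigma> (p+b) e0 * \<tau> (p+b) (-b))"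
  proof
    fix p
    have "cp_mult \<sigma> \<tau> g e p = (\<Sum>a\<in>fsupp g. if a = p + b then g a * \<sigma> a e0 * \<tau> a (p - a) else 0)"
      unfolding cp_mult_def
    proof (rule sum.cong)
      fix a assume "a \<in> fsupp g"
      show "g a * \<sigma> a (e (p - a)) * \<tau> a (p - a) = (if a = p + b then g a * \<sigma> a e0 * \<tau> a (p - a) else 0)"
      proof (cases "a = p + b")
        case True then show ?thesis by (simp add: e_def)
      next
        case False
        then have "p - a \<noteq> -b" by (metis add_diff_cancel_left' diff_add_cancel diff_minus_eq_add)
        then show ?thesis using False by (simp add: e_def sigma_zero[OF cp])
      qed
    qed simp
    also have "\<dots> = (if p + b \<in> fsupp g then g (p+b) * \<sigma> (p+b) e0 * \<tau> (p+b) (-b) else 0)"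
      using fin by (simp add: sum.delta')
    also have "\<dots> = g (p+b) * \<sigma> (p+b) e0 * \<tau> (p+b) (-b)"
      by (auto simp: fsupp_def)
    finally show "cp_mult \<sigma> \<tau> g e p = g (p+b) * \<sigma> (p+b) e0 * \<tau> (p+b) (-b)" .
  qed
  define u where "u = (\<lambda>p. cp_mult \<sigma> \<tau> g e p - cp_one p)"
  have u0: "u 0 = 0"
    unfolding u_def ge cp_one_def using se0 gb tnz by (simp add: mult.assoc)
  have usupp: "fsupp u \<subseteq> (\<lambda>a. a - b) ` fsupp g"
  proof
    fix p assume p: "p \<in> fsupp u"
    then have "p \<noteq> 0" using u0 by (auto simp: fsupp_def)
    then have "g (p + b) \<noteq> 0" using p by (auto simp: fsupp_def u_def ge cp_one_def)
    then show "p \<in> (\<lambda>a. a - b) ` fsupp g"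
      by (auto simp: fsupp_def intro!: image_eqI[where x="p+b"])
  qed
  have upos: "fsupp u \<subseteq> {a. phi_app \<phi> a > 0}"
  proof
    fix p assume p: "p \<in> fsupp u"
    then have "p \<noteq> 0" using u0 by (auto simp: fsupp_def)
    moreover obtain a where a: "a \<in> fsupp g" "p = a - b" using usupp p by blast
    ultimately have "a \<noteq> b" by simp
    then have "phi_app \<phi> a > phi_app \<phi> b" using bmin a by blast
    then show "p \<in> {a. phi_app \<phi> a > 0}" using a by (simp add: phi_diff)
  qed
  have uCP: "u \<in> CP" unfolding CP_def using usupp fin by (blast intro: finite_subset)
  have oneCP: "cp_one \<in> CP" unfolding CP_def fsupp_def cp_one_def
    by (rule CollectI, rule finite_subset[of _ "{0}"]) auto
  have geq: "cp_mult \<sigma> \<tau> g e = (\<lambda>a. cp_one a + u a)" unfolding u_def by simp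
  have "act m (cp_mult \<sigma> \<tau> g e) = act (act m g) e"
    using rm gCP eCP unfolding right_module_def by blast
  also have "\<dots> = 0" using ann act_zero_left[OF rm eCP] by simp
  finally have "0 = act m (\<lambda>a. cp_one a + u a)" using geq by simp
  also have "\<dots> = act m cp_one + act m u" using rm oneCP uCP unfolding right_module_def by blast
  also have "\<dots> = m + act m u" using rm unfolding right_module_def by simp
  finally have eq0: "0 = m + act m u" .
  have "act m (\<lambda>a. - u a) = m"
  proof -
    have "act m (\<lambda>a. - u a) + act m u = m + act m u"
      using act_neg[OF rm uCP, of m] eq0 by simp
    then show ?thesis by simp
  qed
  moreover have "(\<lambda>a. - u a) \<in> CPon {a. phi_app \<phi> a > 0}"
    using upos neg_CP[OF uCP] by (auto simp: CPon_def fsupp_def)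
  ultimately show ?thesis by blast
qed

theorem lemma4p6:
  fixes \<sigma> :: "int ^ 'n::finite \<Rightarrow> 'd::division_ring \<Rightarrow> 'd"
    and \<tau> :: "int ^ 'n \<Rightarrow> int ^ 'n \<Rightarrow> 'd"
    and act :: "'m::ab_group_add \<Rightarrow> (int ^ 'n \<Rightarrow> 'd) \<Rightarrow> 'm"
    and X :: "'m set"
    and c :: "int ^ 'n"
    and V :: "(real ^ 'n) set"
  assumes "crossed_product \<sigma> \<tau>"
    and "right_module \<sigma> \<tau> act"
    and "\<exists>m::'m. m \<noteq> 0"
    and "finite X" and "generates act X"
    and "gk act X \<ge> 1"
    and "c \<noteq> 0"
    and "is_torsion act (range (\<lambda>k::int. k *s c))"
    and "carrier_space (Delta_star act X) V"
  shows "Vcirc V \<inter> range (\<lambda>k::int. k *s c) \<noteq> {0}"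
proof -
  note cp = assms(1) and rm = assms(2)
  define H where "H = {\<phi>::real^'n. phi_app \<phi> c = 0}"
  have DH: "Delta act X \<subseteq> H"
  proof
    fix \<phi> assume D: "\<phi> \<in> Delta act X"
    show "\<phi> \<in> H"
    proof (rule ccontr)
      assume "\<phi> \<notin> H"
      then have pc: "phi_app \<phi> c \<noteq> 0" by (simp add: H_def)
      have W: "\<forall>m. \<exists>w\<in>CPon {a. phi_app \<phi> a > 0}. act m w = m"
      proof
        fix m
        obtain g where g: "g \<in> CPon (range (\<lambda>k::int. k *s c))" "g \<noteq> (\<lambda>_. 0)" "act m g = 0"
          using assms(8) unfolding is_torsion_def by blast
        have inj: "\<forall>a\<in>fsupp g. \<forall>a'\<in>fsupp g. phi_app \<phi> a = phi_app \<phi> a' \<longrightarrow> a = a'"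
        proof (intro ballI impI)
          fix a a' assume "a \<in> fsupp g" "a' \<in> fsupp g" and eq: "phi_app \<phi> a = phi_app \<phi> a'"
          moreover have "fsupp g \<subseteq> range (\<lambda>k::int. k *s c)" using g(1) by (simp add: CPon_def)
          ultimately obtain k k' where "a = k *s c" "a' = k' *s c" by blast
          then show "a = a'" using eq pc by (simp add: phi_smult)
        qed
        show "\<exists>w\<in>CPon {a. phi_app \<phi> a > 0}. act m w = m"
          using unit_lemma[OF cp rm _ g(2) g(3) inj] g(1) by (simp add: CPon_def)
      qed
      then obtain W where Wp: "\<And>m. W m \<in> CPon {a. phi_app \<phi> a > 0}" "\<And>m. act m (W m) = m"
        by metis
      have "XS act X (CPon {a. phi_app \<phi> a \<ge> 0}) \<subseteq> XS act X (CPon {a. phi_app \<phi> a > 0})"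
      proof
        fix y assume "y \<in> XS act X (CPon {a. phi_app \<phi> a \<ge> 0})"
        then obtain h where h: "y = (\<Sum>x\<in>X. act x (h x))" "\<forall>x\<in>X. h x \<in> CPon {a. phi_app \<phi> a \<ge> 0}"
          unfolding XS_def by blast
        have "\<And>x. x \<in> X \<Longrightarrow> act x (h x) = act x (cp_mult \<sigma> \<tau> (W x) (h x))"
        proof -
          fix x assume "x \<in> X"
          then have "h x \<in> CP" using h(2) by (simp add: CPon_def)
          moreover have "W x \<in> CP" using Wp(1) by (simp add: CPon_def)
          ultimately have "act x (cp_mult \<sigma> \<tau> (W x) (h x)) = act (act x (W x)) (h x)"
            using rm unfolding right_module_def by blast
          then show "act x (h x) = act x (cp_mult \<sigma> \<tau> (W x) (h x))" using Wp(2) by simp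
        qed
        then have "y = (\<Sum>x\<in>X. act x (cp_mult \<sigma> \<tau> (W x) (h x)))" using h(1) by simp
        moreover have "\<forall>x\<in>X. cp_mult \<sigma> \<tau> (W x) (h x) \<in> CPon {a. phi_app \<phi> a > 0}"
          using cp_mult_CPon[OF cp Wp(1)] h(2) by blast
        ultimately show "y \<in> XS act X (CPon {a. phi_app \<phi> a > 0})"
          unfolding XS_def by (intro CollectI exI[where x="\<lambda>x. cp_mult \<sigma> \<tau> (W x) (h x)"]) simp
      qed
      moreover have "XS act X (CPon {a. phi_app \<phi> a > 0}) \<subseteq> XS act X (CPon {a. phi_app \<phi> a \<ge> 0})"
        unfolding XS_def CPon_def by fastforce
      ultimately show False using D unfolding Delta_def by blast
    qed
  qed
  have Hsub: "subspace H" unfolding H_def subspace_def phi_app_def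
    by (simp add: sum.distrib distrib_right mult.assoc sum_distrib_left[symmetric])
  have Hcl: "closed H"
  proof -
    have "continuous_on UNIV (\<lambda>\<phi>::real^'n. phi_app \<phi> c)"
      unfolding phi_app_def by (intro continuous_intros)
    then show ?thesis unfolding H_def using closed_Collect_eq[of "\<lambda>\<phi>. phi_app \<phi> c" "\<lambda>_. 0"]
      by (simp add: continuous_on_eq_continuous_at)
  qed
  have "Delta_star act X \<subseteq> H"
    unfolding Delta_star_def
    by (rule closure_minimal) (use DH Hcl in \<open>auto simp: regular_point_def has_mball_nbhd_def\<close>)
  moreover obtain x r where V: "V = span (Delta_star act X \<inter> ball x r)"
    using assms(9) unfolding carrier_space_def by blast
  ultimately have "V \<subseteq> H"
    using Hsub by (metis Int_lower1 span_minimal subset_trans)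
  then have "c \<in> Vcirc V" unfolding Vcirc_def H_def by auto
  moreover have "c \<in> range (\<lambda>k::int. k *s c)" by (rule image_eqI[where x=1]) simp_all
  ultimately show ?thesis using assms(7) by blast
qed

end
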